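(* Let $\rho>0$, $\xi\in\mathbb{R}$, and $H=\frac{1}{2(1+\rho u^2)}\big(u^2(P_u^2+P_y^2)+\xi\big)$ on $(u,y)\in(0,\infty)\times\mathbb{R}$. On the level set $H=E$, $P_y=L>0$, if $2E<\xi$ and $2\rho E>L^2$, the projections to the $(u,y)$-plane of the trajectories of the Hamiltonian flow have equation $$u^2-\frac{2\rho E-L^2}{L^2}(y-y_0)^2=u_*^2,\qquad u\in(u_*,+\infty),$$ for some $y_0\in\mathbb{R}$, where $u_*=\sqrt{\frac{\xi-2E}{2\rho E-L^2}}$. *)

theory Defs
  imports "HOL-Analysis.Analysis"
begin

definition hamH :: "real \<Rightarrow> real \<Rightarrow> real \<Rightarrow> real \<Rightarrow> real \<Rightarrow> real \<Rightarrow> real" where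
  "hamH \<rho> \<xi> u y pu py = (u\<^sup>2 * (pu\<^sup>2 + py\<^sup>2) + \<xi>) / (2 * (1 + \<rho> * u\<^sup>2))"

definition hamiltonian_trajectory ::
  "(real \<Rightarrow> real \<Rightarrow> real \<Rightarrow> real \<Rightarrow> real) \<Rightarrow> real set \<Rightarrow>
   (real \<Rightarrow> real) \<Rightarrow> (real \<Rightarrow> real) \<Rightarrow> (real \<Rightarrow> real) \<Rightarrow> (real \<Rightarrow> real) \<Rightarrow> bool" where
  "hamiltonian_trajectory H T u y pu py \<longleftrightarrow>
    (\<forall>t\<in>T.
      (u has_real_derivative deriv (\<lambda>p. H (u t) (y t) p (py t)) (pu t)) (at t) \<and>
      (y has_real_derivative deriv (\<lambda>q. H (u t) (y t) (pu t) q) (py t)) (at t) \<and>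
      (pu has_real_derivative - deriv (\<lambda>x. H x (y t) (pu t) (py t)) (u t)) (at t) \<and>
      (py has_real_derivative - deriv (\<lambda>x. H (u t) x (pu t) (py t)) (y t)) (at t))"

end

theory Submission
  imports Defs
begin

lemma auxp: "D \<noteq> 0 \<Longrightarrow> ((0 * (p\<^sup>2 + q\<^sup>2) + (real 2 * (1 * p ^ (2 - Suc 0)) + 0) * u\<^sup>2 + 0) *
      (2 * D) -  (u\<^sup>2 * (p\<^sup>2 + q\<^sup>2) + \<xi>) * 0) /
     (2 * D * (2 * D)) =  u\<^sup>2 * p / D"
  by (simp add: field_simps power2_eq_square)

lemma auxq: "D \<noteq> 0 \<Longrightarrow> ((0 * (p\<^sup>2 + q\<^sup>2) + (0 + real 2 * (1 * q ^ (2 - Suc 0))) * u\<^sup>2 + 0) *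
      (2 * D) -  (u\<^sup>2 * (p\<^sup>2 + q\<^sup>2) + \<xi>) * 0) /
     (2 * D * (2 * D)) =  u\<^sup>2 * q / D"
  by (simp add: field_simps power2_eq_square)

lemma dH_p: "deriv (\<lambda>p. hamH \<rho> \<xi> u y p q) p = u\<^sup>2 * p / (1 + \<rho> * u\<^sup>2)"
  if "1 + \<rho> * u\<^sup>2 \<noteq> 0"
proof -
  have "((\<lambda>p. hamH \<rho> \<xi> u y p q) has_real_derivative u\<^sup>2 * p / (1 + \<rho> * u\<^sup>2)) (at p)"
    unfolding hamH_def
    apply (rule derivative_eq_intros refl)+
    using that apply simp
    by (rule auxp[OF that])
  thus ?thesis by (rule DERIV_imp_deriv)
qed

lemma dH_q: "deriv (\<lambda>q. hamH \<rho> \<xi> u y p q) q = u\<^sup>2 * q / (1 + \<rho> * u\<^sup>2)"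
  if "1 + \<rho> * u\<^sup>2 \<noteq> 0"
proof -
  have "((\<lambda>q. hamH \<rho> \<xi> u y p q) has_real_derivative u\<^sup>2 * q / (1 + \<rho> * u\<^sup>2)) (at q)"
    unfolding hamH_def
    apply (rule derivative_eq_intros refl)+
    using that apply simp
    by (rule auxq[OF that])
  thus ?thesis by (rule DERIV_imp_deriv)
qed

lemma dH_u: "deriv (\<lambda>x. hamH \<rho> \<xi> x y p q) u =
   (2*u*(p\<^sup>2+q\<^sup>2) * (2*(1 + \<rho> * u\<^sup>2)) - (u\<^sup>2 * (p\<^sup>2 + q\<^sup>2) + \<xi>) * (4*\<rho>*u)) / (2*(1 + \<rho> * u\<^sup>2))\<^sup>2"
  if "1 + \<rho> * u\<^sup>2 \<noteq> 0"
proof -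
  have "((\<lambda>x. hamH \<rho> \<xi> x y p q) has_real_derivative
   (2*u*(p\<^sup>2+q\<^sup>2) * (2*(1 + \<rho> * u\<^sup>2)) - (u\<^sup>2 * (p\<^sup>2 + q\<^sup>2) + \<xi>) * (4*\<rho>*u)) / (2*(1 + \<rho> * u\<^sup>2))\<^sup>2) (at u)"
    unfolding hamH_def
    apply (rule derivative_eq_intros refl)+
    using that by (auto simp add: field_simps power2_eq_square)
  thus ?thesis by (rule DERIV_imp_deriv)
qed

theorem proposition16:
  fixes \<rho> \<xi> E L :: real and T :: "real set"
    and u y pu py :: "real \<Rightarrow> real"
  assumes rho_pos: "\<rho> > 0"
    and L_pos: "L > 0"
    and E1: "2 * E < \<xi>"
    and E2: "2 * \<rho> * E > L\<^sup>2"
    and T_open: "open T" and T_interval: "is_interval T" and T_ne: "T \<noteq> {}"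
    and traj: "hamiltonian_trajectory (hamH \<rho> \<xi>) T u y pu py"
    and u_pos: "\<forall>t\<in>T. u t > 0"
    and level: "\<forall>t\<in>T. hamH \<rho> \<xi> (u t) (y t) (pu t) (py t) = E"
    and mom: "\<forall>t\<in>T. py t = L"
  shows "\<exists>y0::real. \<forall>t\<in>T.
           (u t)\<^sup>2 - (2 * \<rho> * E - L\<^sup>2) / L\<^sup>2 * (y t - y0)\<^sup>2
             = (sqrt ((\<xi> - 2 * E) / (2 * \<rho> * E - L\<^sup>2)))\<^sup>2
           \<and> u t \<ge> sqrt ((\<xi> - 2 * E) / (2 * \<rho> * E - L\<^sup>2))"
proof -
  define a where "a = 2 * \<rho> * E - L\<^sup>2"
  define b where "b = \<xi> - 2 * E"
  have a_pos: "a > 0" using E2 by (simp add: a_def)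
  have b_pos: "b > 0" using E1 by (simp add: b_def)
  define g where "g t = y t - (L / a) * (u t * pu t)" for t
  have gd: "(g has_field_derivative 0) (at t within T)" if tT: "t \<in> T" for t
  proof -
    define D where "D = 1 + \<rho> * (u t)\<^sup>2"
    have Dpos: "D > 0" unfolding D_def using rho_pos by (simp add: add_pos_nonneg)
    have Dnz: "1 + \<rho> * (u t)\<^sup>2 \<noteq> 0" using Dpos by (simp add: D_def)
    have pyt: "py t = L" using mom tT by auto
    have tr: "(u has_real_derivative deriv (\<lambda>p. hamH \<rho> \<xi> (u t) (y t) p (py t)) (pu t)) (at t) \<and>
      (y has_real_derivative deriv (\<lambda>q. hamH \<rho> \<xi> (u t) (y t) (pu t) q) (py t)) (at t) \<and>
      (pu has_real_derivative - deriv (\<lambda>x. hamH \<rho> \<xi> x (y t) (pu t) (py t)) (u t)) (at t)"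
      using traj tT unfolding hamiltonian_trajectory_def by blast
    note hp = dH_p[OF Dnz] and hq = dH_q[OF Dnz] and hu = dH_u[OF Dnz]
    define U where "U = u t" define P where "P = pu t"
    have du: "(u has_real_derivative U\<^sup>2 * P / D) (at t)"
      using tr hp unfolding U_def P_def D_def by simp
    have dy: "(y has_real_derivative U\<^sup>2 * L / D) (at t)"
      using tr hq pyt unfolding U_def P_def D_def by simp
    have dp: "(pu has_real_derivative - ((2*U*(P\<^sup>2+L\<^sup>2) * (2*D) - (U\<^sup>2 * (P\<^sup>2 + L\<^sup>2) + \<xi>) * (4*\<rho>*U)) / (2*D)\<^sup>2)) (at t)"
      using tr hu pyt unfolding U_def P_def D_def by simp
    have h: "(U\<^sup>2 * (P\<^sup>2 + L\<^sup>2) + \<xi>) / (2 * D) = E"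
      using level tT pyt unfolding hamH_def U_def P_def D_def by auto
    have lev: "U\<^sup>2 * (P\<^sup>2 + L\<^sup>2) + \<xi> = 2 * E * D"
      using h Dpos by (simp add: divide_eq_eq mult.commute mult.left_commute)
    have dp2: "(pu has_real_derivative - (U * (P\<^sup>2 + L\<^sup>2 - 2 * \<rho> * E) / D)) (at t)"
    proof -
      have "(2*U*(P\<^sup>2+L\<^sup>2) * (2*D) - (U\<^sup>2 * (P\<^sup>2 + L\<^sup>2) + \<xi>) * (4*\<rho>*U)) / (2*D)\<^sup>2
            = (2*U*(P\<^sup>2+L\<^sup>2) * (2*D) - (2 * E * D) * (4*\<rho>*U)) / (2*D)\<^sup>2"
        by (simp only: lev)
      also have "\<dots> = U * (P\<^sup>2 + L\<^sup>2 - 2 * \<rho> * E) / D"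
        using Dpos by (simp add: field_simps power2_eq_square)
      finally show ?thesis using dp by simp
    qed
    have "(g has_real_derivative
        U\<^sup>2 * L / D - (L / a) * (U\<^sup>2 * P / D * P + U * (- (U * (P\<^sup>2 + L\<^sup>2 - 2 * \<rho> * E) / D)))) (at t)"
      unfolding g_def[abs_def] U_def P_def
      using DERIV_diff[OF dy[unfolded U_def] DERIV_cmult[OF DERIV_mult[OF du[unfolded U_def P_def] dp2[unfolded U_def P_def]], of "L / a"]]
      by (simp add: mult.commute mult.left_commute)
    moreover have "U\<^sup>2 * L / D - (L / a) * (U\<^sup>2 * P / D * P + U * (- (U * (P\<^sup>2 + L\<^sup>2 - 2 * \<rho> * E) / D))) = 0"
      using Dpos a_pos unfolding a_def by (simp add: field_simps power2_eq_square)
    ultimately have "(g has_real_derivative 0) (at t)" by simp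
    thus ?thesis by (rule has_field_derivative_at_within)
  qed
  obtain c where c: "\<forall>t\<in>T. g t = c"
    using has_field_derivative_zero_constant[OF is_interval_convex[OF T_interval] gd] by blast
  have sq: "(sqrt (b / a))\<^sup>2 = b / a" using a_pos b_pos by simp
  show ?thesis
  proof (intro exI ballI conjI)
    fix t assume tT: "t \<in> T"
    define D where "D = 1 + \<rho> * (u t)\<^sup>2"
    have Dpos: "D > 0" unfolding D_def using rho_pos by (simp add: add_pos_nonneg)
    have pyt: "py t = L" using mom tT by auto
    have h: "((u t)\<^sup>2 * ((pu t)\<^sup>2 + L\<^sup>2) + \<xi>) / (2 * D) = E"
      using level tT pyt unfolding hamH_def D_def by auto
    have lev: "(u t)\<^sup>2 * ((pu t)\<^sup>2 + L\<^sup>2) + \<xi> = 2 * E * D"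
      using h Dpos by (simp add: divide_eq_eq mult.commute mult.left_commute)
    have up: "(u t)\<^sup>2 * (pu t)\<^sup>2 = a * (u t)\<^sup>2 - b"
      using lev unfolding a_def b_def D_def by (simp add: algebra_simps)
    have yc: "y t - c = (L / a) * (u t * pu t)" using c tT unfolding g_def by auto
    have "a / L\<^sup>2 * (y t - c)\<^sup>2 = (u t)\<^sup>2 * (pu t)\<^sup>2 / a"
      unfolding yc using a_pos L_pos by (simp add: field_simps power2_eq_square)
    also have "\<dots> = (u t)\<^sup>2 - b / a" unfolding up using a_pos by (simp add: field_simps)
    finally have eq: "a / L\<^sup>2 * (y t - c)\<^sup>2 = (u t)\<^sup>2 - b / a" .
    show "(u t)\<^sup>2 - (2 * \<rho> * E - L\<^sup>2) / L\<^sup>2 * (y t - c)\<^sup>2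
             = (sqrt ((\<xi> - 2 * E) / (2 * \<rho> * E - L\<^sup>2)))\<^sup>2"
      using eq sq unfolding a_def b_def by simp
    have "b / a \<le> (u t)\<^sup>2"
      using eq a_pos by (metis diff_ge_0_iff_ge divide_nonneg_pos zero_le_power2 zero_less_power2 L_pos less_irrefl mult_nonneg_nonneg order_less_imp_le)
    hence "sqrt (b / a) \<le> sqrt ((u t)\<^sup>2)" by (rule real_sqrt_le_mono)
    thus "u t \<ge> sqrt ((\<xi> - 2 * E) / (2 * \<rho> * E - L\<^sup>2))"
      using u_pos tT unfolding a_def b_def by force
  qed
qed

end
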